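(* Let $(A,A^* )$ be a left-symmetric bialgebroid. Then for all $x\in\Gamma(A)$ and $\xi\in\Gamma(A^* )$, $$[a_A(x),a_{A^*}(\xi)]=a_{A^*}(L^*_x\xi)-a_A(L^*_\xi x),$$ where the left side is the commutator of vector fields, $L^*_x\xi\in\Gamma(A^* )$ is given by $\langle L^*_x\xi,y\rangle=a_A(x)\langle\xi,y\rangle-\langle\xi,x\cdot_Ay\rangle$, and $L^*_\xi x\in\Gamma(A)$ by $\langle L^*_\xi x,\eta\rangle=a_{A^*}(\xi)\langle x,\eta\rangle-\langle x,\xi\cdot_{A^*}\eta\rangle$.
   Context: A left-symmetric algebroid is a vector bundle $A\to M$ with an $\mathbb R$-bilinear multiplication $\cdot_A$ on $\Gamma(A)$ with $x\cdot_A(y\cdot_Az)-(x\cdot_Ay)\cdot_Az$ symmetric in $x,y$, and an anchor $a_A:A\to TM$ with $x\cdot_A(fy)=f(x\cdot_Ay)+a_A(x)(f)y$, $(fx)\cdot_Ay=f(x\cdot_Ay)$; $[x,y]_A=x\cdot_Ay-y\cdot_Ax$. The coboundary $\delta:C^n(A)\to C^{n+1}(A)$, $C^{n+1}(A)=\Gamma(\wedge^nA^*\otimes A^* )$, is $\delta\varphi(x_1,\dots,x_{n+1})=\sum_{i=1}^n(-1)^{i+1}a_A(x_i)\varphi(\dots,\hat{x_i},\dots,x_{n+1})-\sum_{i=1}^n(-1)^{i+1}\varphi(\dots,\hat{x_i},\dots,x_n,x_i\cdot_Ax_{n+1})+\sum_{i<j\le n}(-1)^{i+j}\varphi([x_i,x_j]_A,\dots,\hat{x_i},\dots,\hat{x_j},\dots,x_{n+1})$.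 The Lie derivative $\mathfrak L_x$ on $\Gamma(A\otimes A)$ is $\mathfrak L_x(y_1\otimes y_2)=(x\cdot_Ay_1)\otimes y_2+y_1\otimes[x,y_2]_A$. For left-symmetric algebroids $A$ and $A^*$ on dual bundles, $[\cdot,\cdot]_{A^*}$, $\delta_*$, $\mathfrak L_\xi$ are defined by the same formulas with $A$ and $A^*$ exchanged. $(A,A^* )$ is a left-symmetric bialgebroid if $\delta[\xi,\eta]_{A^*}=\mathfrak L_\xi\delta\eta-\mathfrak L_\eta\delta\xi$ and $\delta_*[x,y]_A=\mathfrak L_x\delta_*y-\mathfrak L_y\delta_*x$ for all $x,y\in\Gamma(A)$, $\xi,\eta\in\Gamma(A^* )$. *)

theory Defs
  imports Complex_Main
begin

text \<open>Algebraic (Serre--Swan) model.  The ring of smooth functions C-infinity(M) is an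
abstract commutative real algebra of type 'r.  Vector fields on M are the real-linear
derivations of 'r, and the commutator of vector fields is the commutator of derivations.
Gamma(A) is an 'r-module of type 'x, Gamma(A*) an 'r-module of type 'e, with the
C-infinity(M)-bilinear duality pairing p.  That A is a (finite rank) vector bundle and A*
its dual bundle is encoded by a finite dual basis (xb i, eb i), i < n, of the pairing.\<close>

definition derivation :: "('r::{comm_ring_1,real_algebra_1} \<Rightarrow> 'r) \<Rightarrow> bool" where
  "derivation D \<longleftrightarrow>
     (\<forall>f g. D (f + g) = D f + D g) \<and>
     (\<forall>(c::real) f. D (c *\<^sub>R f) = c *\<^sub>R D f) \<and>
     (\<forall>f g. D (f * g) = f * D g + g * D f)"

definition vf_bracket :: "('r \<Rightarrow> 'r) \<Rightarrow> ('r \<Rightarrow> 'r) \<Rightarrow> ('r::comm_ring_1 \<Rightarrow> 'r)" where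
  "vf_bracket X Y = (\<lambda>f. X (Y f) - Y (X f))"

definition dual_bundle_pair ::
  "('r::comm_ring_1 \<Rightarrow> 'x::ab_group_add \<Rightarrow> 'x) \<Rightarrow> ('r \<Rightarrow> 'e::ab_group_add \<Rightarrow> 'e) \<Rightarrow>
   ('x \<Rightarrow> 'e \<Rightarrow> 'r) \<Rightarrow> nat \<Rightarrow> (nat \<Rightarrow> 'x) \<Rightarrow> (nat \<Rightarrow> 'e) \<Rightarrow> bool" where
  "dual_bundle_pair sA sE p n xb eb \<longleftrightarrow>
     module sA \<and> module sE \<and>
     (\<forall>x y \<eta>. p (x + y) \<eta> = p x \<eta> + p y \<eta>) \<and>
     (\<forall>f x \<eta>. p (sA f x) \<eta> = f * p x \<eta>) \<and>
     (\<forall>x \<eta> \<zeta>. p x (\<eta> + \<zeta>) = p x \<eta> + p x \<zeta>) \<and>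
     (\<forall>f x \<eta>. p x (sE f \<eta>) = f * p x \<eta>) \<and>
     (\<forall>y. y = (\<Sum>i<n. sA (p y (eb i)) (xb i))) \<and>
     (\<forall>\<eta>. \<eta> = (\<Sum>i<n. sE (p (xb i) \<eta>) (eb i)))"

definition left_symmetric_algebroid ::
  "('r::{comm_ring_1,real_algebra_1} \<Rightarrow> 'x::ab_group_add \<Rightarrow> 'x) \<Rightarrow> ('x \<Rightarrow> 'x \<Rightarrow> 'x) \<Rightarrow>
   ('x \<Rightarrow> 'r \<Rightarrow> 'r) \<Rightarrow> bool" where
  "left_symmetric_algebroid s mu a \<longleftrightarrow>
     module s \<and>
     (\<forall>x y z. mu x (y + z) = mu x y + mu x z) \<and>
     (\<forall>x y z. mu (x + y) z = mu x z + mu y z) \<and>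
     (\<forall>(c::real) x y. mu x (s (c *\<^sub>R 1) y) = s (c *\<^sub>R 1) (mu x y)) \<and>
     (\<forall>x y z. mu x (mu y z) - mu (mu x y) z = mu y (mu x z) - mu (mu y x) z) \<and>
     (\<forall>x. derivation (a x)) \<and>
     (\<forall>x y. a (x + y) = (\<lambda>f. a x f + a y f)) \<and>
     (\<forall>f x. a (s f x) = (\<lambda>g. f * a x g)) \<and>
     (\<forall>x f y. mu x (s f y) = s f (mu x y) + s (a x f) y) \<and>
     (\<forall>f x y. mu (s f x) y = s f (mu x y))"

definition lsa_bracket :: "('x \<Rightarrow> 'x \<Rightarrow> 'x) \<Rightarrow> 'x \<Rightarrow> 'x \<Rightarrow> 'x::ab_group_add" where
  "lsa_bracket mu x y = mu x y - mu y x"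

text \<open>Sections of A* (x) A* are represented as C-infinity-bilinear forms on Gamma(A), the
decomposable tensor eta1 (x) eta2 being (y1,y2) |-> <y1,eta1><y2,eta2>.\<close>
definition cobound1 :: "('x \<Rightarrow> 'x \<Rightarrow> 'x) \<Rightarrow> ('x \<Rightarrow> 'r \<Rightarrow> 'r) \<Rightarrow> ('x \<Rightarrow> 'e \<Rightarrow> 'r) \<Rightarrow>
    'e \<Rightarrow> ('x \<Rightarrow> 'x \<Rightarrow> 'r::comm_ring_1)" where
  "cobound1 mu a p \<eta> = (\<lambda>y1 y2. a y1 (p y2 \<eta>) - p (mu y1 y2) \<eta>)"

text \<open>Lie derivative on Gamma(A* (x) A*) along xi in Gamma(A*), for the left-symmetric
algebroid structure (sE, muE) on A*: defined on decomposable tensors by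
L_xi(eta1 (x) eta2) = (xi.eta1) (x) eta2 + eta1 (x) [xi,eta2], and applied to the
decomposition Phi = sum_{i,j} (Phi(xb i, xb j) eb i) (x) eb j of a tensor Phi.\<close>
definition lie_tensor :: "('r \<Rightarrow> 'e \<Rightarrow> 'e) \<Rightarrow> ('e \<Rightarrow> 'e \<Rightarrow> 'e::ab_group_add) \<Rightarrow>
    ('x \<Rightarrow> 'e \<Rightarrow> 'r::comm_ring_1) \<Rightarrow> nat \<Rightarrow> (nat \<Rightarrow> 'x) \<Rightarrow> (nat \<Rightarrow> 'e) \<Rightarrow>
    'e \<Rightarrow> ('x \<Rightarrow> 'x \<Rightarrow> 'r) \<Rightarrow> ('x \<Rightarrow> 'x \<Rightarrow> 'r)" where
  "lie_tensor sE muE p n xb eb \<xi> \<Phi> = (\<lambda>z1 z2.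
     \<Sum>i<n. \<Sum>j<n.
       p z1 (muE \<xi> (sE (\<Phi> (xb i) (xb j)) (eb i))) * p z2 (eb j)
     + p z1 (sE (\<Phi> (xb i) (xb j)) (eb i)) * p z2 (lsa_bracket muE \<xi> (eb j)))"

text \<open>Left-symmetric bialgebroid (A, A*).  The second compatibility condition is the first
with the roles of A and A* exchanged (pairing flipped, dual basis swapped).\<close>
definition ls_bialgebroid ::
  "('r::{comm_ring_1,real_algebra_1} \<Rightarrow> 'x::ab_group_add \<Rightarrow> 'x) \<Rightarrow> ('x \<Rightarrow> 'x \<Rightarrow> 'x) \<Rightarrow> ('x \<Rightarrow> 'r \<Rightarrow> 'r) \<Rightarrow>
   ('r \<Rightarrow> 'e::ab_group_add \<Rightarrow> 'e) \<Rightarrow> ('e \<Rightarrow> 'e \<Rightarrow> 'e) \<Rightarrow> ('e \<Rightarrow> 'r \<Rightarrow> 'r) \<Rightarrow>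
   ('x \<Rightarrow> 'e \<Rightarrow> 'r) \<Rightarrow> nat \<Rightarrow> (nat \<Rightarrow> 'x) \<Rightarrow> (nat \<Rightarrow> 'e) \<Rightarrow> bool" where
  "ls_bialgebroid sA muA aA sE muE aE p n xb eb \<longleftrightarrow>
     dual_bundle_pair sA sE p n xb eb \<and>
     left_symmetric_algebroid sA muA aA \<and>
     left_symmetric_algebroid sE muE aE \<and>
     (\<forall>\<xi> \<eta>. cobound1 muA aA p (lsa_bracket muE \<xi> \<eta>) =
        (\<lambda>z1 z2. lie_tensor sE muE p n xb eb \<xi> (cobound1 muA aA p \<eta>) z1 z2
                - lie_tensor sE muE p n xb eb \<eta> (cobound1 muA aA p \<xi>) z1 z2)) \<and>
     (\<forall>x y. cobound1 muE aE (\<lambda>\<eta> z. p z \<eta>) (lsa_bracket muA x y) =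
        (\<lambda>\<zeta>1 \<zeta>2. lie_tensor sA muA (\<lambda>\<eta> z. p z \<eta>) n eb xb x (cobound1 muE aE (\<lambda>\<eta> z. p z \<eta>) y) \<zeta>1 \<zeta>2
                - lie_tensor sA muA (\<lambda>\<eta> z. p z \<eta>) n eb xb y (cobound1 muE aE (\<lambda>\<eta> z. p z \<eta>) x) \<zeta>1 \<zeta>2))"

definition dual_action_A :: "('x \<Rightarrow> 'x \<Rightarrow> 'x) \<Rightarrow> ('x \<Rightarrow> 'r \<Rightarrow> 'r) \<Rightarrow> ('x \<Rightarrow> 'e \<Rightarrow> 'r::comm_ring_1) \<Rightarrow>
    'x \<Rightarrow> 'e \<Rightarrow> 'e" where
  "dual_action_A muA aA p x \<xi> = (THE \<zeta>. \<forall>y. p y \<zeta> = aA x (p y \<xi>) - p (muA x y) \<xi>)"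

definition dual_action_E :: "('e \<Rightarrow> 'e \<Rightarrow> 'e) \<Rightarrow> ('e \<Rightarrow> 'r \<Rightarrow> 'r) \<Rightarrow> ('x \<Rightarrow> 'e \<Rightarrow> 'r::comm_ring_1) \<Rightarrow>
    'e \<Rightarrow> 'x \<Rightarrow> 'x" where
  "dual_action_E muE aE p \<xi> x = (THE z. \<forall>\<eta>. p z \<eta> = aE \<xi> (p x \<eta>) - p x (muE \<xi> \<eta>))"

end

theory Submission
  imports Defs
begin

locale dbp =
  fixes sA :: "'r::{comm_ring_1,real_algebra_1} \<Rightarrow> 'x::ab_group_add \<Rightarrow> 'x"
    and sE :: "'r \<Rightarrow> 'e::ab_group_add \<Rightarrow> 'e"
    and p :: "'x \<Rightarrow> 'e \<Rightarrow> 'r" and n :: nat and xb :: "nat \<Rightarrow> 'x" and eb :: "nat \<Rightarrow> 'e"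
  assumes D: "dual_bundle_pair sA sE p n xb eb"
begin

lemma mA: "module sA" and mE: "module sE"
  and padd1: "p (x + y) \<eta> = p x \<eta> + p y \<eta>"
  and pscl1: "p (sA f x) \<eta> = f * p x \<eta>"
  and padd2: "p x (\<eta> + \<zeta>) = p x \<eta> + p x \<zeta>"
  and pscl2: "p x (sE f \<eta>) = f * p x \<eta>"
  and expA: "y = (\<Sum>i<n. sA (p y (eb i)) (xb i))"
  and expE: "\<eta> = (\<Sum>i<n. sE (p (xb i) \<eta>) (eb i))"
  using D unfolding dual_bundle_pair_def by blast+

lemma add1: "additive (\<lambda>x. p x \<eta>)" by unfold_locales (rule padd1)
lemma add2: "additive (\<lambda>\<eta>. p x \<eta>)" by unfold_locales (rule padd2)

lemma psum1: "p (\<Sum>i\<in>I. g i) \<eta> = (\<Sum>i\<in>I. p (g i) \<eta>)"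
  using additive.sum[OF add1] by blast
lemma psum2: "p x (\<Sum>i\<in>I. g i) = (\<Sum>i\<in>I. p x (g i))"
  using additive.sum[OF add2] by blast

lemma linexpA:
  assumes a: "\<And>y z. F (y + z) = F y + F z" and s: "\<And>g y. F (sA g y) = g * F y"
  shows "F y = (\<Sum>i<n. p y (eb i) * F (xb i))"
proof -
  have ad: "additive F" by unfold_locales (rule a)
  have "F y = F (\<Sum>i<n. sA (p y (eb i)) (xb i))" using expA by metis
  also have "\<dots> = (\<Sum>i<n. p y (eb i) * F (xb i))" by (simp add: additive.sum[OF ad] s)
  finally show ?thesis .
qed

lemma pdiff2: "p x (\<eta> - \<zeta>) = p x \<eta> - p x \<zeta>" using additive.diff[OF add2] by blast
lemma pdiff1: "p (x - y) \<eta> = p x \<eta> - p y \<eta>" using additive.diff[OF add1] by blast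

lemma extA: assumes "\<And>\<eta>. p x \<eta> = p y \<eta>" shows "x = y"
  by (metis (no_types, lifting) assms expA sum.cong)

lemma existsA:
  assumes a: "\<And>\<eta> \<zeta>. F (\<eta> + \<zeta>) = F \<eta> + F \<zeta>" and s: "\<And>g \<eta>. F (sE g \<eta>) = g * F \<eta>"
  shows "\<exists>!w. \<forall>\<eta>. p w \<eta> = F \<eta>"
proof
  have ad: "additive F" by unfold_locales (rule a)
  let ?w = "\<Sum>i<n. sA (F (eb i)) (xb i)"
  show "\<forall>\<eta>. p ?w \<eta> = F \<eta>"
  proof
    fix \<eta>
    have "F \<eta> = F (\<Sum>i<n. sE (p (xb i) \<eta>) (eb i))" using expE by metis
    also have "\<dots> = (\<Sum>i<n. p (xb i) \<eta> * F (eb i))" by (simp add: additive.sum[OF ad] s)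
    finally show "p ?w \<eta> = F \<eta>" by (simp add: psum1 pscl1 mult.commute)
  qed
  show "\<And>w. \<forall>\<eta>. p w \<eta> = F \<eta> \<Longrightarrow> w = ?w"
    using \<open>\<forall>\<eta>. p ?w \<eta> = F \<eta>\<close> extA by metis
qed
end

lemma dbp_flip: "dual_bundle_pair sA sE p n xb eb \<Longrightarrow> dual_bundle_pair sE sA (\<lambda>a b. p b a) n eb xb"
  unfolding dual_bundle_pair_def by (auto simp: mult.commute)


lemma der_add: "derivation D \<Longrightarrow> D (f + g) = D f + D g" unfolding derivation_def by blast
lemma der_mult: "derivation D \<Longrightarrow> D (f * g) = f * D g + g * D f" unfolding derivation_def by blast
lemma der_additive: "derivation D \<Longrightarrow> additive D" by unfold_locales (rule der_add)
lemma der_zero: "derivation D \<Longrightarrow> D 0 = 0" using additive.zero der_additive by blast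
lemma der_diff: "derivation D \<Longrightarrow> D (f - g) = D f - D g" using additive.diff der_additive by blast
lemma der_sum: "derivation D \<Longrightarrow> D (\<Sum>i\<in>I. g i) = (\<Sum>i\<in>I. D (g i))" using additive.sum der_additive by blast

locale lsa =
  fixes s :: "'r::{comm_ring_1,real_algebra_1} \<Rightarrow> 'x::ab_group_add \<Rightarrow> 'x"
    and mu :: "'x \<Rightarrow> 'x \<Rightarrow> 'x" and a :: "'x \<Rightarrow> 'r \<Rightarrow> 'r"
  assumes L: "left_symmetric_algebroid s mu a"
begin
lemma m: "module s"
  and muadd2: "mu x (y + z) = mu x y + mu x z"
  and muadd1: "mu (x + y) z = mu x z + mu y z"
  and der: "derivation (a x)"
  and aadd: "a (x + y) = (\<lambda>f. a x f + a y f)"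
  and ascl: "a (s f x) = (\<lambda>g. f * a x g)"
  and leib: "mu x (s f y) = s f (mu x y) + s (a x f) y"
  and muscl: "mu (s f x) y = s f (mu x y)"
  using L unfolding left_symmetric_algebroid_def by simp_all

lemma aadd': "a (x + y) f = a x f + a y f" by (simp add: aadd)
lemma ascl': "a (s f x) g = f * a x g" by (simp add: ascl)
lemma aplus: "a x (f + g) = a x f + a x g" using der der_add by blast
lemma amult: "a x (f * g) = f * a x g + g * a x f" using der der_mult by blast
lemma adiff: "a x (f - g) = a x f - a x g" using der der_diff by blast
lemma asum: "a x (\<Sum>i\<in>I. g i) = (\<Sum>i\<in>I. a x (g i))" using der der_sum by blast

lemma mu2_additive: "additive (mu x)" by unfold_locales (rule muadd2)
lemma mu1_additive: "additive (\<lambda>x. mu x z)" by unfold_locales (rule muadd1)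
lemma musum2: "mu x (\<Sum>i\<in>I. g i) = (\<Sum>i\<in>I. mu x (g i))" using additive.sum[OF mu2_additive] by blast
lemma mudiff2: "mu x (y - z) = mu x y - mu x z" using additive.diff[OF mu2_additive] by blast
lemma mudiff1: "mu (y - z) x = mu y x - mu z x" using additive.diff[OF mu1_additive] by blast

lemma br_add2: "lsa_bracket mu x (y + z) = lsa_bracket mu x y + lsa_bracket mu x z"
  unfolding lsa_bracket_def by (simp add: muadd2 muadd1 algebra_simps)
lemma br_additive: "additive (lsa_bracket mu x)" by unfold_locales (rule br_add2)
lemma br_sum2: "lsa_bracket mu x (\<Sum>i\<in>I. g i) = (\<Sum>i\<in>I. lsa_bracket mu x (g i))"
  using additive.sum[OF br_additive] by blast
lemma br_scl2: "lsa_bracket mu x (s f y) = s f (lsa_bracket mu x y) + s (a x f) y"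
  unfolding lsa_bracket_def by (simp add: leib muscl module.scale_right_diff_distrib[OF m])
lemma br_scl1: "lsa_bracket mu (s f y) x = s f (lsa_bracket mu y x) - s (a x f) y"
  unfolding lsa_bracket_def by (simp add: leib muscl module.scale_right_diff_distrib[OF m])
end

locale dbpE = dbp sA sE p n xb eb + E: lsa sE muE aE
  for sA :: "'r::{comm_ring_1,real_algebra_1} \<Rightarrow> 'x::ab_group_add \<Rightarrow> 'x"
    and sE :: "'r \<Rightarrow> 'e::ab_group_add \<Rightarrow> 'e"
    and p :: "'x \<Rightarrow> 'e \<Rightarrow> 'r" and n :: nat and xb :: "nat \<Rightarrow> 'x" and eb :: "nat \<Rightarrow> 'e"
    and muE aE
begin

lemma dact: "p (dual_action_E muE aE p \<xi> z) \<theta> = aE \<xi> (p z \<theta>) - p z (muE \<xi> \<theta>)"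
proof -
  have "\<exists>!w. \<forall>\<theta>. p w \<theta> = aE \<xi> (p z \<theta>) - p z (muE \<xi> \<theta>)"
    apply (rule existsA)
    apply (simp add: padd2 E.aplus E.muadd2)
    apply (simp add: pscl2 E.amult E.leib padd2 algebra_simps)
    done
  from theI'[OF this] show ?thesis unfolding dual_action_E_def by blast
qed


lemma LT_formula:
  assumes a1: "\<And>u v y. \<Phi> (u + v) y = \<Phi> u y + \<Phi> v y"
    and s1: "\<And>g u y. \<Phi> (sA g u) y = g * \<Phi> u y"
    and a2: "\<And>u y y'. \<Phi> u (y + y') = \<Phi> u y + \<Phi> u y'"
    and s2: "\<And>g u y. \<Phi> u (sA g y) = g * \<Phi> u y"
    and bdef: "\<And>y. p y \<beta> = \<Phi> z1 y"
  shows "lie_tensor sE muE p n xb eb \<xi> \<Phi> z1 z2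
     = p z2 (lsa_bracket muE \<xi> \<beta>) - \<Phi> (dual_action_E muE aE p \<xi> z1) z2"
proof -
  define w where "w = dual_action_E muE aE p \<xi> z1"
  define br where "br = lsa_bracket muE"
  have h: "\<And>\<theta>. p z1 (muE \<xi> \<theta>) = aE \<xi> (p z1 \<theta>) - p w \<theta>"
    unfolding w_def by (simp add: dact)
  have ex1: "\<And>u j. \<Phi> u (xb j) = (\<Sum>i<n. p u (eb i) * \<Phi> (xb i) (xb j))"
    by (rule linexpA) (simp_all add: a1 s1)
  have ex2: "\<Phi> w z2 = (\<Sum>j<n. p z2 (eb j) * \<Phi> w (xb j))"
    by (rule linexpA) (simp_all add: a2 s2)
  have "lie_tensor sE muE p n xb eb \<xi> \<Phi> z1 z2 =
     (\<Sum>i<n. \<Sum>j<n. (aE \<xi> (\<Phi> (xb i) (xb j) * p z1 (eb i)) - \<Phi> (xb i) (xb j) * p w (eb i)) * p z2 (eb j)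
        + \<Phi> (xb i) (xb j) * p z1 (eb i) * p z2 (br \<xi> (eb j)))"
    unfolding lie_tensor_def br_def by (simp add: h pscl2)
  also have "\<dots> = (\<Sum>j<n. \<Sum>i<n. (aE \<xi> (p z1 (eb i) * \<Phi> (xb i) (xb j)) * p z2 (eb j) - p w (eb i) * \<Phi> (xb i) (xb j) * p z2 (eb j))
        + p z1 (eb i) * \<Phi> (xb i) (xb j) * p z2 (br \<xi> (eb j)))"
    by (subst sum.swap) (simp add: algebra_simps)
  also have "\<dots> = (\<Sum>j<n. aE \<xi> (\<Phi> z1 (xb j)) * p z2 (eb j) - \<Phi> w (xb j) * p z2 (eb j)
        + \<Phi> z1 (xb j) * p z2 (br \<xi> (eb j)))"
    by (simp add: ex1[of z1] ex1[of w] sum.distrib sum_subtractf sum_distrib_right E.asum)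
  also have "\<dots> = p z2 (br \<xi> \<beta>) - \<Phi> w z2"
  proof -
    have "\<beta> = (\<Sum>j<n. sE (\<Phi> z1 (xb j)) (eb j))" using expE[of \<beta>] by (simp add: bdef)
    then have "p z2 (br \<xi> \<beta>) = (\<Sum>j<n. \<Phi> z1 (xb j) * p z2 (br \<xi> (eb j)) + aE \<xi> (\<Phi> z1 (xb j)) * p z2 (eb j))"
      unfolding br_def by (simp add: E.br_sum2 E.br_scl2 psum2 padd2 pscl2)
    then show ?thesis using ex2 by (simp add: sum.distrib sum_subtractf algebra_simps)
  qed
  finally show ?thesis unfolding w_def br_def .
qed

end


lemma daA_eq: "dual_action_A muA aA p = dual_action_E muA aA (\<lambda>a b. p b a)"
  unfolding dual_action_A_def dual_action_E_def by (intro ext) simp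

lemma key:
  assumes H: "ls_bialgebroid sA muA aA sE muE aE p n xb eb"
  shows "(aA z1 (aE \<xi> f) - aE \<xi> (aA z1 f) + aA (dual_action_E muE aE p \<xi> z1) f
          - aE (dual_action_A muA aA p z1 \<xi>) f) * p z2 \<eta> = 0"
proof -
  have dp: "dual_bundle_pair sA sE p n xb eb" and lA: "left_symmetric_algebroid sA muA aA"
    and lE: "left_symmetric_algebroid sE muE aE"
    and C: "\<And>\<xi> \<eta>. cobound1 muA aA p (lsa_bracket muE \<xi> \<eta>) =
        (\<lambda>z1 z2. lie_tensor sE muE p n xb eb \<xi> (cobound1 muA aA p \<eta>) z1 z2
                - lie_tensor sE muE p n xb eb \<eta> (cobound1 muA aA p \<xi>) z1 z2)"
    using H unfolding ls_bialgebroid_def by blast+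
  interpret dbpE sA sE p n xb eb muE aE
    by (simp add: dbpE_def dbp_def dp lsa_def lE)
  interpret F: dbpE sE sA "\<lambda>a b. p b a" n eb xb muA aA
    by (simp add: dbpE_def dbp_def dbp_flip[OF dp] lsa_def lA)

  define L where "L = dual_action_E muE aE p"
  define S where "S = dual_action_A muA aA p"
  define Dc where "Dc = cobound1 muA aA p"
  define br where "br = lsa_bracket muE"
  have pL: "\<And>\<xi> z \<theta>. p (L \<xi> z) \<theta> = aE \<xi> (p z \<theta>) - p z (muE \<xi> \<theta>)"
    unfolding L_def by (rule dact)
  have pS: "\<And>z \<eta> y. p y (S z \<eta>) = aA z (p y \<eta>) - p (muA z y) \<eta>"
    unfolding S_def daA_eq using F.dact by simp
  have Dc: "\<And>\<eta> y1 y2. Dc \<eta> y1 y2 = aA y1 (p y2 \<eta>) - p (muA y1 y2) \<eta>"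
    unfolding Dc_def cobound1_def by simp
  have K: "\<And>\<xi> \<eta> z1 z2. Dc (br \<xi> \<eta>) z1 z2 = p z2 (br \<xi> (S z1 \<eta>)) - Dc \<eta> (L \<xi> z1) z2
           - (p z2 (br \<eta> (S z1 \<xi>)) - Dc \<xi> (L \<eta> z1) z2)"
  proof -
    fix \<xi> \<eta> z1 z2
    have LT: "lie_tensor sE muE p n xb eb \<xi> (Dc \<eta>) z1 z2 = p z2 (br \<xi> (S z1 \<eta>)) - Dc \<eta> (L \<xi> z1) z2"
      for \<xi> \<eta>
      unfolding br_def L_def
      by (rule LT_formula)
        (simp_all add: Dc pS padd1 padd2 pscl1 pscl2 F.E.aadd' F.E.ascl' F.E.muadd1 F.E.muadd2 F.E.muscl
           F.E.aplus F.E.amult F.E.leib algebra_simps)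
    show "?thesis \<xi> \<eta> z1 z2" using fun_cong[OF fun_cong[OF C[of \<xi> \<eta>], of z1], of z2]
      unfolding Dc_def[symmetric] br_def[symmetric] LT by simp
  qed
  have Sf: "S z1 (sE f \<eta>) = sE f (S z1 \<eta>) + sE (aA z1 f) \<eta>"
    by (rule F.extA) (simp add: pS padd2 pscl2 F.E.leib F.E.amult padd1 pscl1 algebra_simps)
  have Lf: "L (sE f \<eta>) z1 = sA f (L \<eta> z1)"
    by (rule extA) (simp add: pL pscl1 E.ascl' E.muscl pscl2 algebra_simps)
  have pbr: "\<And>z. p z (br \<xi> (sE f \<eta>)) = f * p z (br \<xi> \<eta>) + aE \<xi> f * p z \<eta>"
    unfolding br_def by (simp add: E.br_scl2 padd2 pscl2)
  have T0: "Dc (br \<xi> (sE f \<eta>)) z1 z2 = f * Dc (br \<xi> \<eta>) z1 z2 + aA z1 f * p z2 (br \<xi> \<eta>)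
      + aE \<xi> f * Dc \<eta> z1 z2 + aA z1 (aE \<xi> f) * p z2 \<eta>"
    by (simp add: Dc pbr F.E.aplus F.E.amult algebra_simps)
  have T1: "p z2 (br \<xi> (S z1 (sE f \<eta>))) = f * p z2 (br \<xi> (S z1 \<eta>)) + aE \<xi> f * Dc \<eta> z1 z2
      + aA z1 f * p z2 (br \<xi> \<eta>) + aE \<xi> (aA z1 f) * p z2 \<eta>"
    unfolding Sf br_def by (simp add: E.br_add2 E.br_scl2 padd2 pscl2 Dc pS algebra_simps)
  have T2: "Dc (sE f \<eta>) (L \<xi> z1) z2 = f * Dc \<eta> (L \<xi> z1) z2 + aA (L \<xi> z1) f * p z2 \<eta>"
    by (simp add: Dc pscl2 F.E.amult algebra_simps)
  have T3: "p z2 (br (sE f \<eta>) (S z1 \<xi>)) = f * p z2 (br \<eta> (S z1 \<xi>)) - aE (S z1 \<xi>) f * p z2 \<eta>"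
    unfolding br_def by (simp add: E.br_scl1 pdiff2 pscl2)
  have T4: "Dc \<xi> (L (sE f \<eta>) z1) z2 = f * Dc \<xi> (L \<eta> z1) z2"
    unfolding Lf by (simp add: Dc F.E.ascl' F.E.muscl pscl1 algebra_simps)
  note K1 = K[of \<xi> "sE f \<eta>" z1 z2]
  note K0 = K[of \<xi> \<eta> z1 z2]
  have "(aA z1 (aE \<xi> f) - aE \<xi> (aA z1 f) + aA (L \<xi> z1) f - aE (S z1 \<xi>) f) * p z2 \<eta>
     = (Dc (br \<xi> (sE f \<eta>)) z1 z2 - (p z2 (br \<xi> (S z1 (sE f \<eta>))) - Dc (sE f \<eta>) (L \<xi> z1) z2
           - (p z2 (br (sE f \<eta>) (S z1 \<xi>)) - Dc \<xi> (L (sE f \<eta>) z1) z2)))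
       - f * (Dc (br \<xi> \<eta>) z1 z2 - (p z2 (br \<xi> (S z1 \<eta>)) - Dc \<eta> (L \<xi> z1) z2
           - (p z2 (br \<eta> (S z1 \<xi>)) - Dc \<xi> (L \<eta> z1) z2)))"
    unfolding T0 T1 T2 T3 T4 by (simp add: algebra_simps)
  also have "\<dots> = 0" using K0 K1 by simp
  finally show ?thesis unfolding L_def S_def .
qed


theorem mainTheorem4:
  fixes sA :: "'r::{comm_ring_1,real_algebra_1} \<Rightarrow> 'x::ab_group_add \<Rightarrow> 'x"
    and muA :: "'x \<Rightarrow> 'x \<Rightarrow> 'x" and aA :: "'x \<Rightarrow> 'r \<Rightarrow> 'r"
    and sE :: "'r \<Rightarrow> 'e::ab_group_add \<Rightarrow> 'e"
    and muE :: "'e \<Rightarrow> 'e \<Rightarrow> 'e" and aE :: "'e \<Rightarrow> 'r \<Rightarrow> 'r"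
    and p :: "'x \<Rightarrow> 'e \<Rightarrow> 'r" and n :: nat and xb :: "nat \<Rightarrow> 'x" and eb :: "nat \<Rightarrow> 'e"
    and x :: 'x and \<xi> :: 'e
  assumes "ls_bialgebroid sA muA aA sE muE aE p n xb eb"
  shows "vf_bracket (aA x) (aE \<xi>) =
           (\<lambda>f. aE (dual_action_A muA aA p x \<xi>) f - aA (dual_action_E muE aE p \<xi> x) f)"
proof
  fix f
  note H = assms
  have dp: "dual_bundle_pair sA sE p n xb eb" and lA: "left_symmetric_algebroid sA muA aA"
    and lE: "left_symmetric_algebroid sE muE aE"
    using H unfolding ls_bialgebroid_def by blast+
  interpret dbpE sA sE p n xb eb muE aE
    by (simp add: dbpE_def dbp_def dp lsa_def lE)
  interpret F: dbpE sE sA "\<lambda>a b. p b a" n eb xb muA aA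
    by (simp add: dbpE_def dbp_def dbp_flip[OF dp] lsa_def lA)
  define L where "L = dual_action_E muE aE p"
  define S where "S = dual_action_A muA aA p"
  have pL: "\<And>\<xi> z \<theta>. p (L \<xi> z) \<theta> = aE \<xi> (p z \<theta>) - p z (muE \<xi> \<theta>)"
    unfolding L_def by (rule dact)
  have pS: "\<And>z \<eta> y. p y (S z \<eta>) = aA z (p y \<eta>) - p (muA z y) \<eta>"
    unfolding S_def daA_eq using F.dact by simp
  define c where "c = (\<lambda>z. aA z (aE \<xi> f) - aE \<xi> (aA z f) + aA (L \<xi> z) f - aE (S z \<xi>) f)"
  have Ladd: "\<And>y z. L \<xi> (y + z) = L \<xi> y + L \<xi> z"
    by (rule extA) (simp add: pL padd1 E.aplus algebra_simps)
  have Lscl: "\<And>g y. L \<xi> (sA g y) = sA g (L \<xi> y) + sA (aE \<xi> g) y"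
    by (rule extA) (simp add: pL pscl1 E.amult padd1 algebra_simps)
  have Sadd: "\<And>y z. S (y + z) \<xi> = S y \<xi> + S z \<xi>"
    by (rule F.extA) (simp add: pS padd2 F.E.aadd' F.E.muadd1 padd1 algebra_simps)
  have Sscl: "\<And>g y. S (sA g y) \<xi> = sE g (S y \<xi>)"
    by (rule F.extA) (simp add: pS pscl2 F.E.ascl' F.E.muscl pscl1 algebra_simps)
  have cx: "c x = (\<Sum>i<n. p x (eb i) * c (xb i))"
  proof (rule linexpA)
    show "\<And>y z. c (y + z) = c y + c z"
      unfolding c_def by (simp add: Ladd Sadd F.E.aadd' E.aadd' E.aplus algebra_simps)
    show "\<And>g y. c (sA g y) = g * c y"
      unfolding c_def by (simp add: Lscl Sscl F.E.aadd' F.E.ascl' E.ascl' E.amult algebra_simps)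
  qed
  also have "\<dots> = 0"
    using key[OF H, of "xb _" \<xi> f x "eb _"] unfolding c_def L_def S_def
    by (simp add: mult.commute)
  finally have "c x = 0" .
  then show "vf_bracket (aA x) (aE \<xi>) f =
      aE (dual_action_A muA aA p x \<xi>) f - aA (dual_action_E muE aE p \<xi> x) f"
    unfolding vf_bracket_def c_def L_def S_def by (simp add: algebra_simps)
qed

end
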